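(* Let $y_1, \ldots, y_n \in \mathfrak m$ be a minimal system of generators of $\mathfrak m$ (so $R = k[[y_1,\ldots,y_n]]$). Then, after possibly reordering $y_1, \ldots, y_n$, there exist elements $x_1, \ldots, x_n \in R$ and $z_1, \ldots, z_n \in R$ such that for all $i = 1, \ldots, n$: (1) $v(x_i) = a_i$; (2) $z_i \in k[x_1, \ldots, x_{i-1}]$ (a polynomial in $x_1,\ldots,x_{i-1}$), with $z_1 = 0$; (3) $y_i = x_i + z_i$.
   Context: Let $k$ be a field and let $(R,\mathfrak m)$ be a complete local noetherian domain of dimension $1$ containing $k$ with $R/\mathfrak m = k$, with normalization $\overline R$ having residue field $k$, so $\overline R = k[[t]]$ and $R \subseteq k[[t]]$ is finite birational. Let $v$ be the $t$-adic valuation. For $A \subseteq k((t))$ let $v(A) = \{v(f): f\in A\setminus\{0\}\}$. The Herzog–Kunz sequence of $R$ is $v(\mathfrak m)\setminus v(\mathfrak m^2)$ listed increasingly as $a_1 < \cdots < a_n$ (with $n = \mathrm{edim}(R)$). For $y_i\in\mathfrak m$, $k[[y_1,\ldots,y_n]]$ is the image of $k[[Y_1,\ldots,Y_n]]\to k[[t]]$, $Y_i\mapsto y_i$. *)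

theory Defs
  imports "HOL-Computational_Algebra.Formal_Power_Series"
begin

text \<open>Setting: k is the field type 'a, k[[t]] is 'a fps, v is subdegree.
  R is a k-subalgebra of k[[t]] such that k[[t]] is finite and birational over R,
  which (for such rings) amounts to: R contains t^c k[[t]] for some c.\<close>

definition val :: "'a::zero fps set \<Rightarrow> nat set" where
  "val A = subdegree ` (A - {0})"

definition max_ideal :: "'a::zero fps set \<Rightarrow> 'a fps set" where
  "max_ideal R = {f \<in> R. fps_nth f 0 = 0}"

definition ideal_sq :: "'a::comm_ring_1 fps set \<Rightarrow> 'a fps set" where
  "ideal_sq M = {(\<Sum>j<N. a j * b j) | (N::nat) a b. \<forall>j<N. a j \<in> M \<and> b j \<in> M}"

text \<open>Herzog--Kunz sequence v(m) - v(m^2), listed increasingly (0-indexed list).\<close>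
definition herzog_kunz :: "'a::comm_ring_1 fps set \<Rightarrow> nat list" where
  "herzog_kunz R = sorted_list_of_set (val (max_ideal R) - val (ideal_sq (max_ideal R)))"

definition complete_local_branch :: "'a::field fps set \<Rightarrow> bool" where
  "complete_local_branch R \<longleftrightarrow>
     (\<forall>c. fps_const c \<in> R) \<and>
     (\<forall>f\<in>R. \<forall>g\<in>R. f + g \<in> R \<and> f * g \<in> R \<and> - f \<in> R) \<and>
     (\<exists>c. \<forall>f. (\<forall>j<c. fps_nth f j = 0) \<longrightarrow> f \<in> R)"

inductive_set k_alg :: "'a::field fps set \<Rightarrow> 'a fps set" for S where
  const: "fps_const c \<in> k_alg S"
| gen: "s \<in> S \<Longrightarrow> s \<in> k_alg S"
| add: "a \<in> k_alg S \<Longrightarrow> b \<in> k_alg S \<Longrightarrow> a + b \<in> k_alg S"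
| mult: "a \<in> k_alg S \<Longrightarrow> b \<in> k_alg S \<Longrightarrow> a * b \<in> k_alg S"

definition generates :: "'a::comm_ring_1 fps set \<Rightarrow> 'a fps set \<Rightarrow> nat set \<Rightarrow> (nat \<Rightarrow> 'a fps) \<Rightarrow> bool" where
  "generates R M I y \<longleftrightarrow> M = {(\<Sum>i\<in>I. r i * y i) | r. \<forall>i\<in>I. r i \<in> R}"

definition minimal_generators :: "'a::comm_ring_1 fps set \<Rightarrow> 'a fps set \<Rightarrow> nat \<Rightarrow> (nat \<Rightarrow> 'a fps) \<Rightarrow> bool" where
  "minimal_generators R M n y \<longleftrightarrow>
     (\<forall>i<n. y i \<in> M) \<and> generates R M {..<n} y \<and>
     (\<forall>j<n. \<not> generates R M ({..<n} - {j}) y)"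

end

theory Submission
  imports Defs
begin
unbundle fps_syntax

definition zb :: "nat \<Rightarrow> 'a::zero fps \<Rightarrow> bool" where
  "zb N f \<longleftrightarrow> (\<forall>j<N. f $ j = 0)"

lemma zb_mono: "zb N f \<Longrightarrow> N' \<le> N \<Longrightarrow> zb N' f" by (auto simp: zb_def)
lemma zb_add: "zb N f \<Longrightarrow> zb N g \<Longrightarrow> zb N (f + (g::'a::monoid_add fps))" by (auto simp: zb_def)
lemma zb_diff: "zb N f \<Longrightarrow> zb N (g::'a::ab_group_add fps) \<Longrightarrow> zb N (f - g)" by (auto simp: zb_def)
lemma zb_0[simp]: "zb N 0" by (auto simp: zb_def)
lemma zb_sum: "finite I \<Longrightarrow> (\<And>i. i \<in> I \<Longrightarrow> zb N (f i)) \<Longrightarrow> zb N (\<Sum>i\<in>I. f i :: 'a::comm_monoid_add fps)"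
  by (induction I rule: finite_induct) (auto intro: zb_add)
lemma zb_cmult: "zb N f \<Longrightarrow> zb N (fps_const c * (f::'a::ring fps))" by (auto simp: zb_def)

lemma zb_mult: 
  assumes "zb N (f::'a::comm_ring_1 fps)" "zb K g" shows "zb (N + K) (f * g)"
  unfolding zb_def
proof (intro allI impI)
  fix j assume j: "j < N + K"
  have "(f * g) $ j = (\<Sum>i=0..j. f$i * g$(j - i))" by (rule fps_mult_nth)
  also have "\<dots> = 0"
  proof (rule sum.neutral, intro ballI)
    fix i assume "i \<in> {0..j}"
    show "f$i * g$(j-i) = 0"
    proof (cases "i < N")
      case True then show ?thesis using assms(1) by (simp add: zb_def)
    next
      case False then have "j - i < K" using j \<open>i \<in> {0..j}\<close> by auto
      then show ?thesis using assms(2) by (simp add: zb_def)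
    qed
  qed
  finally show "(f * g) $ j = 0" .
qed

lemma zb_subdegree: "f \<noteq> 0 \<Longrightarrow> zb (subdegree f) f"
  by (auto simp: zb_def nth_less_subdegree_zero)

lemma subdeg_eq: "zb N f \<Longrightarrow> f $ N \<noteq> 0 \<Longrightarrow> f \<noteq> 0 \<and> subdegree f = N"
  by (auto simp: zb_def intro: subdegreeI)

lemma zb_X_power: "zb N (fps_X ^ N * (f::'a::comm_ring_1 fps))"
  by (auto simp: zb_def fps_X_power_mult_nth)

lemma k_alg_mono: assumes "S \<subseteq> T" shows "p \<in> k_alg S \<Longrightarrow> p \<in> k_alg T"
  by (induction p rule: k_alg.induct) (use assms in \<open>auto intro: k_alg.intros\<close>)

lemma k_alg_sum: "finite I \<Longrightarrow> (\<And>i. i \<in> I \<Longrightarrow> f i \<in> k_alg S) \<Longrightarrow> (\<Sum>i\<in>I. f i) \<in> k_alg S"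
proof (induction I rule: finite_induct)
  case empty then show ?case using k_alg.const[of 0 S] by simp
next
  case (insert x F) then show ?case by (auto intro: k_alg.add)
qed

lemma k_alg_cmult: "p \<in> k_alg S \<Longrightarrow> fps_const c * p \<in> k_alg S"
  by (auto intro: k_alg.intros)

lemma k_alg_zero: "0 \<in> k_alg S" using k_alg.const[of 0 S] by simp

lemma k_alg_diff: "p \<in> k_alg S \<Longrightarrow> q \<in> k_alg S \<Longrightarrow> p - q \<in> k_alg S"
proof -
  assume "p \<in> k_alg S" "q \<in> k_alg S"
  then have "p + fps_const (-1) * q \<in> k_alg S" by (auto intro: k_alg.intros)
  moreover have "p + fps_const (-1) * q = p - q" by (simp add: fps_const_neg[symmetric])
  ultimately show ?thesis by simp
qed

lemma k_alg_empty: "p \<in> k_alg {} \<Longrightarrow> p = fps_const (p $ 0)"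
proof (induction p rule: k_alg.induct)
  case (add a b) then show ?case by (metis fps_add_nth fps_const_add)
next
  case (mult a b) then show ?case by (metis fps_const_mult fps_mult_nth_0)
qed auto



locale br =
  fixes R :: "'a::field fps set"
  assumes cl: "complete_local_branch R"
begin

abbreviation "M \<equiv> max_ideal R"
abbreviation "M2 \<equiv> ideal_sq M"

lemma R_const: "fps_const c \<in> R" using cl by (auto simp: complete_local_branch_def)
lemma R_add: "f \<in> R \<Longrightarrow> g \<in> R \<Longrightarrow> f + g \<in> R" using cl by (auto simp: complete_local_branch_def)
lemma R_mult: "f \<in> R \<Longrightarrow> g \<in> R \<Longrightarrow> f * g \<in> R" using cl by (auto simp: complete_local_branch_def)
lemma R_neg: "f \<in> R \<Longrightarrow> - f \<in> R" using cl by (auto simp: complete_local_branch_def)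
lemma R_diff: "f \<in> R \<Longrightarrow> g \<in> R \<Longrightarrow> f - g \<in> R" using R_add[of f "-g"] R_neg[of g] by simp
lemma R_0: "0 \<in> R" using R_const[of 0] by simp
lemma R_1: "1 \<in> R" using R_const[of 1] by simp

lemma conductor: obtains c where "c \<ge> 1" "\<And>f. zb c f \<Longrightarrow> f \<in> R"
proof -
  obtain c where c: "\<forall>f. (\<forall>j<c. f $ j = 0) \<longrightarrow> f \<in> R" using cl by (auto simp: complete_local_branch_def)
  show ?thesis
    by (rule that[of "max c 1"]) (use c in \<open>auto simp: zb_def\<close>)
qed

lemma R_sum: "finite I \<Longrightarrow> (\<And>i. i \<in> I \<Longrightarrow> f i \<in> R) \<Longrightarrow> (\<Sum>i\<in>I. f i) \<in> R"
  by (induction I rule: finite_induct) (auto intro: R_add R_0)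

lemma mem_M: "f \<in> M \<longleftrightarrow> f \<in> R \<and> f $ 0 = 0" by (simp add: max_ideal_def)

lemma M_add: "f \<in> M \<Longrightarrow> g \<in> M \<Longrightarrow> f + g \<in> M" by (auto simp: mem_M intro: R_add)
lemma M_diff: "f \<in> M \<Longrightarrow> g \<in> M \<Longrightarrow> f - g \<in> M" by (auto simp: mem_M intro: R_diff)
lemma M_multR: "f \<in> M \<Longrightarrow> r \<in> R \<Longrightarrow> r * f \<in> M" by (auto simp: mem_M intro: R_mult)
lemma M_cmult: "f \<in> M \<Longrightarrow> fps_const c * f \<in> M" by (auto simp: mem_M intro: R_mult R_const)
lemma M_0: "0 \<in> M" by (simp add: mem_M R_0)
lemma M_sum: "finite I \<Longrightarrow> (\<And>i. i \<in> I \<Longrightarrow> f i \<in> M) \<Longrightarrow> (\<Sum>i\<in>I. f i) \<in> M"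
  by (induction I rule: finite_induct) (auto intro: M_add M_0)
lemma M_R: "f \<in> M \<Longrightarrow> f \<in> R" by (simp add: mem_M)

lemma mem_M2: "g \<in> M2 \<longleftrightarrow> (\<exists>(N::nat) a b. g = (\<Sum>j<N. a j * b j) \<and> (\<forall>j<N. a j \<in> M \<and> b j \<in> M))"
  unfolding ideal_sq_def by auto

lemma M2_intro: assumes "(\<And>j. j < (N::nat) \<Longrightarrow> a j \<in> M \<and> b j \<in> M)" shows "(\<Sum>j<N. a j * b j) \<in> M2"
  unfolding mem_M2 using assms by blast

lemma M2_prod: "a \<in> M \<Longrightarrow> b \<in> M \<Longrightarrow> a * b \<in> M2"
proof -
  assume "a \<in> M" "b \<in> M"
  then have "(\<Sum>j<(1::nat). a * b) \<in> M2" using M2_intro[of "1::nat" "\<lambda>_. a" "\<lambda>_. b"] by blast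
  moreover have "(\<Sum>j<(1::nat). a * b) = a * b" by simp
  ultimately show ?thesis by simp
qed

lemma M2_0: "0 \<in> M2" using M2_intro[of 0 "\<lambda>_. 0" "\<lambda>_. 0"] by simp

lemma M2_sub_M: "g \<in> M2 \<Longrightarrow> g \<in> M"
  unfolding mem_M2 by (auto intro!: M_sum M_multR M_R)

lemma M2_add: assumes "f \<in> M2" "g \<in> M2" shows "f + g \<in> M2"
proof -
  obtain N1 :: nat and a1 b1 where 1: "f = (\<Sum>j<N1. a1 j * b1 j)" "\<forall>j<N1. a1 j \<in> M \<and> b1 j \<in> M"
    using assms(1) unfolding mem_M2 by blast
  obtain N2 :: nat and a2 b2 where 2: "g = (\<Sum>j<N2. a2 j * b2 j)" "\<forall>j<N2. a2 j \<in> M \<and> b2 j \<in> M"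
    using assms(2) unfolding mem_M2 by blast
  define a where "a j = (if j < N1 then a1 j else a2 (j - N1))" for j
  define b where "b j = (if j < N1 then b1 j else b2 (j - N1))" for j
  have "(\<Sum>j<N1+N2. a j * b j) = (\<Sum>j<N1. a j * b j) + (\<Sum>j=N1..<N1+N2. a j * b j)"
    by (simp add: sum.atLeastLessThan_concat[symmetric] lessThan_atLeast0)
  also have "(\<Sum>j<N1. a j * b j) = f" using 1 by (simp add: a_def b_def)
  also have "(\<Sum>j=N1..<N1+N2. a j * b j) = (\<Sum>j<N2. a (j + N1) * b (j + N1))"
    using sum.shift_bounds_nat_ivl[of "\<lambda>j. a j * b j" 0 N1 N2] by (simp add: lessThan_atLeast0 add.commute)
  also have "\<dots> = g" using 2 by (simp add: a_def b_def)
  finally have "f + g = (\<Sum>j<N1+N2. a j * b j)" by simp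
  moreover have "\<forall>j<N1+N2. a j \<in> M \<and> b j \<in> M" using 1 2 by (auto simp: a_def b_def)
  ultimately show ?thesis by (auto intro: M2_intro)
qed

lemma M2_cmult: assumes "f \<in> M2" shows "fps_const c * f \<in> M2"
proof -
  obtain N :: nat and a b where 1: "f = (\<Sum>j<N. a j * b j)" "\<forall>j<N. a j \<in> M \<and> b j \<in> M"
    using assms(1) unfolding mem_M2 by blast
  have "fps_const c * f = (\<Sum>j<N. (fps_const c * a j) * b j)"
    using 1 by (simp add: sum_distrib_left mult.assoc)
  then show ?thesis using 1 by (auto intro!: M2_intro M_cmult)
qed

lemma M2_diff: "f \<in> M2 \<Longrightarrow> g \<in> M2 \<Longrightarrow> f - g \<in> M2"
  using M2_add[of f "fps_const (-1) * g"] M2_cmult[of g "-1"] by (simp add: fps_const_neg[symmetric])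

lemma M2_sum: "finite I \<Longrightarrow> (\<And>i. i \<in> I \<Longrightarrow> f i \<in> M2) \<Longrightarrow> (\<Sum>i\<in>I. f i) \<in> M2"
  by (induction I rule: finite_induct) (auto intro: M2_add M2_0)

lemma k_alg_R: assumes "S \<subseteq> R" shows "p \<in> k_alg S \<Longrightarrow> p \<in> R"
  by (induction p rule: k_alg.induct) (use assms in \<open>auto intro: R_const R_add R_mult\<close>)

lemma k_alg_M: "S \<subseteq> M \<Longrightarrow> p \<in> k_alg S \<Longrightarrow> p $ 0 = 0 \<Longrightarrow> p \<in> M"
proof -
  assume a: "S \<subseteq> M" "p \<in> k_alg S" "p $ 0 = 0"
  then have "S \<subseteq> R" using M_R by auto
  then show ?thesis using k_alg_R[of S p] a by (auto simp: mem_M)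
qed

end


context br begin

lemma zb1_M: "f \<in> M \<Longrightarrow> zb 1 f" by (auto simp: zb_def mem_M)

lemma approx:
  assumes SM: "S \<subseteq> M"
    and H: "\<forall>w<B. w \<in> val M \<and> w \<notin> val M2 \<longrightarrow> (\<exists>s\<in>S. s \<noteq> 0 \<and> subdegree s = w)"
  shows "N \<le> B \<Longrightarrow> (\<forall>f\<in>M. \<exists>p\<in>k_alg S. p \<in> M \<and> zb N (f - p)) \<and>
           (\<forall>g\<in>M2. \<exists>p\<in>k_alg S. p \<in> M2 \<and> zb (Suc N) (g - p))"
proof (induction N)
  case 0
  show ?case
  proof (intro conjI ballI)
    fix f assume "f \<in> M" then show "\<exists>p\<in>k_alg S. p \<in> M \<and> zb 0 (f - p)"
      by (intro bexI[of _ 0]) (auto simp: k_alg_zero M_0 zb_def)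
  next
    fix g assume "g \<in> M2" then show "\<exists>p\<in>k_alg S. p \<in> M2 \<and> zb (Suc 0) (g - p)"
      using zb1_M[OF M2_sub_M] by (intro bexI[of _ 0]) (auto simp: k_alg_zero M2_0)
  qed
next
  case (Suc N)
  then have NB: "N < B" "N \<le> B" by auto
  have IH1: "\<forall>f\<in>M. \<exists>p\<in>k_alg S. p \<in> M \<and> zb N (f - p)"
   and IH2: "\<forall>g\<in>M2. \<exists>p\<in>k_alg S. p \<in> M2 \<and> zb (Suc N) (g - p)" using Suc.IH NB by auto
  have C1: "\<forall>f\<in>M. \<exists>p\<in>k_alg S. p \<in> M \<and> zb (Suc N) (f - p)"
  proof
    fix f assume f: "f \<in> M"
    obtain p where p: "p \<in> k_alg S" "p \<in> M" "zb N (f - p)" using IH1 f by blast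
    define d where "d = f - p"
    have dM: "d \<in> M" using f p by (simp add: d_def M_diff)
    show "\<exists>p\<in>k_alg S. p \<in> M \<and> zb (Suc N) (f - p)"
    proof (cases "d $ N = 0")
      case True
      then have "zb (Suc N) (f - p)" using p(3) by (auto simp: zb_def d_def less_Suc_eq)
      then show ?thesis using p by blast
    next
      case False
      have dsub: "d \<noteq> 0" "subdegree d = N" using subdeg_eq[OF p(3)[folded d_def] False] by auto
      have "\<exists>s\<in>k_alg S. s \<in> M \<and> zb N s \<and> s $ N \<noteq> 0"
      proof (cases "N \<in> val M2")
        case True
        then obtain e where e: "e \<in> M2" "e \<noteq> 0" "subdegree e = N" by (auto simp: val_def)
        obtain q where q: "q \<in> k_alg S" "q \<in> M2" "zb (Suc N) (e - q)" using IH2 e(1) by blast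
        have zbe: "zb N e" using zb_subdegree[OF e(2)] e(3) by simp
        have "q = e - (e - q)" by simp
        then have "zb N q" using zbe zb_mono[OF q(3), of N] zb_diff by fastforce
        moreover have "q $ N \<noteq> 0"
        proof -
          have "(e - q) $ N = 0" using q(3) by (simp add: zb_def)
          moreover have "e $ N \<noteq> 0" using e nth_subdegree_nonzero by metis
          ultimately show ?thesis by simp
        qed
        ultimately show ?thesis using q M2_sub_M by blast
      next
        case False
        have "N \<in> val M" using dM dsub by (auto simp: val_def)
        then obtain s where s: "s \<in> S" "s \<noteq> 0" "subdegree s = N" using H NB False by blast
        show ?thesis
          using s SM zb_subdegree[OF s(2)] nth_subdegree_nonzero[OF s(2)]
          by (intro bexI[of _ s]) (auto intro: k_alg.gen)
      qed
      then obtain s where s: "s \<in> k_alg S" "s \<in> M" "zb N s" "s $ N \<noteq> 0" by blast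
      define p' where "p' = p + fps_const (d $ N / s $ N) * s"
      have "p' \<in> k_alg S" using p s by (auto simp: p'_def intro: k_alg.intros)
      moreover have "p' \<in> M" using p s by (auto simp: p'_def intro: M_add M_cmult)
      moreover have "zb (Suc N) (f - p')"
      proof -
        have "f - p' = d - fps_const (d $ N / s $ N) * s" by (simp add: p'_def d_def)
        moreover have "zb N (d - fps_const (d $ N / s $ N) * s)"
          using p(3) s(3) by (auto simp: d_def intro!: zb_diff zb_cmult)
        moreover have "(d - fps_const (d $ N / s $ N) * s) $ N = 0" using s(4) by simp
        ultimately show ?thesis by (auto simp: zb_def less_Suc_eq)
      qed
      ultimately show ?thesis by blast
    qed
  qed
  have C2: "\<forall>g\<in>M2. \<exists>p\<in>k_alg S. p \<in> M2 \<and> zb (Suc (Suc N)) (g - p)"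
  proof
    fix g assume g: "g \<in> M2"
    obtain p where p: "p \<in> k_alg S" "p \<in> M2" "zb (Suc N) (g - p)" using IH2 g by blast
    have "g - p \<in> M2" using g p by (simp add: M2_diff)
    then obtain K :: nat and a b where ab: "g - p = (\<Sum>l<K. a l * b l)" "\<forall>l<K. a l \<in> M \<and> b l \<in> M"
      unfolding mem_M2 by blast
    have "\<forall>l. \<exists>q. l < K \<longrightarrow> q \<in> k_alg S \<and> q \<in> M \<and> zb (Suc N) (a l - q)" using C1 ab(2) by blast
    then obtain pa where pa: "\<And>l. l < K \<Longrightarrow> pa l \<in> k_alg S \<and> pa l \<in> M \<and> zb (Suc N) (a l - pa l)" by metis
    have "\<forall>l. \<exists>q. l < K \<longrightarrow> q \<in> k_alg S \<and> q \<in> M \<and> zb (Suc N) (b l - q)" using C1 ab(2) by blast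
    then obtain pb where pb: "\<And>l. l < K \<Longrightarrow> pb l \<in> k_alg S \<and> pb l \<in> M \<and> zb (Suc N) (b l - pb l)" by metis
    define e where "e = (\<Sum>l<K. pa l * pb l)"
    have eK: "e \<in> k_alg S" unfolding e_def using pa pb by (auto intro!: k_alg_sum intro: k_alg.mult)
    have eM2: "e \<in> M2" unfolding e_def using pa pb by (auto intro!: M2_intro)
    have "zb (Suc (Suc N)) (g - p - e)"
    proof -
      have "g - p - e = (\<Sum>l<K. (a l - pa l) * b l + pa l * (b l - pb l))"
        by (simp add: ab(1) e_def sum_subtractf[symmetric] algebra_simps)
      moreover have "zb (Suc (Suc N)) ((a l - pa l) * b l + pa l * (b l - pb l))" if l: "l < K" for l
      proof -
        have "zb (Suc N + 1) ((a l - pa l) * b l)" using pa[OF l] ab(2) l zb1_M by (intro zb_mult) auto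
        moreover have "zb (1 + Suc N) (pa l * (b l - pb l))" using pa[OF l] pb[OF l] zb1_M by (intro zb_mult) auto
        ultimately show ?thesis by (auto intro: zb_add)
      qed
      ultimately show ?thesis by (auto intro!: zb_sum)
    qed
    then show "\<exists>p\<in>k_alg S. p \<in> M2 \<and> zb (Suc (Suc N)) (g - p)"
      using p eK eM2 by (intro bexI[of _ "p + e"]) (auto intro: M2_add k_alg.add simp: diff_diff_eq)
  qed
  show ?case using C1 C2 by blast
qed

end


context br begin

lemma fc_add: "fps_const (a+b) * f = fps_const a * f + fps_const (b::'b::comm_ring_1) * f"
  by (metis fps_const_add distrib_right)
lemma fc_mult: "fps_const (a*b) * f = fps_const a * (fps_const (b::'b::comm_ring_1) * f)"
  by (metis fps_const_mult mult.assoc)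
lemma ring_id1: "(A + L1 + m1) * (B + L2 + m2) = A*B + (A*L2 + B*L1) + (A*m2 + B*m1 + (L1+m1)*(L2+(m2::'b::comm_ring_1)))"
  by (simp add: algebra_simps)
lemma ring_id2: "(A + L1 + m1) + (B + L2 + m2) = (A+B) + (L1 + L2) + (m1 + (m2::'b::comm_ring_1))"
  by (simp add: algebra_simps)

lemma lin_M: "\<forall>l<(i::nat). x l \<in> M \<Longrightarrow> (\<Sum>l<i. fps_const (d l) * x l) \<in> M"
  by (auto intro!: M_sum M_cmult)

lemma span_decomp:
  assumes xM: "\<forall>l<(i::nat). x l \<in> M"
  shows "P \<in> k_alg (x`{..<i}) \<Longrightarrow> \<exists>\<alpha> d m. m \<in> M2 \<and> P = fps_const \<alpha> + (\<Sum>l<i. fps_const (d l) * x l) + m"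
proof (induction P rule: k_alg.induct)
  case (const c)
  show ?case by (rule exI[of _ c], rule exI[of _ "\<lambda>_. 0"], rule exI[of _ 0]) (simp add: M2_0)
next
  case (gen s)
  then obtain l0 where l0: "l0 < i" "s = x l0" by auto
  have "(\<Sum>l<i. fps_const (if l = l0 then 1 else 0) * x l) = (\<Sum>l<i. (if l = l0 then x l else 0))"
    by (intro sum.cong) auto
  also have "\<dots> = x l0" using l0 by simp
  finally show ?case using l0
    by (intro exI[of _ 0] exI[of _ "\<lambda>l. if l = l0 then 1 else 0"] exI[of _ 0]) (simp add: M2_0)
next
  case (add a b)
  note IH1 = add.IH(1) and IH2 = add.IH(2)
  obtain \<alpha>1 d1 m1 where 1: "m1 \<in> M2" "a = fps_const \<alpha>1 + (\<Sum>l<i. fps_const (d1 l) * x l) + m1"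
    using IH1 by (elim exE conjE) (rule that)
  obtain \<alpha>2 d2 m2 where 2: "m2 \<in> M2" "b = fps_const \<alpha>2 + (\<Sum>l<i. fps_const (d2 l) * x l) + m2"
    using IH2 by (elim exE conjE) (rule that)
  have "(\<Sum>l<i. fps_const (d1 l + d2 l) * x l) = (\<Sum>l<i. fps_const (d1 l) * x l) + (\<Sum>l<i. fps_const (d2 l) * x l)"
    by (simp only: fc_add sum.distrib)
  then have E: "a + b = fps_const (\<alpha>1 + \<alpha>2) + (\<Sum>l<i. fps_const (d1 l + d2 l) * x l) + (m1 + m2)"
    unfolding 1(2) 2(2) ring_id2 by simp
  show ?case by (rule exI, rule exI, rule exI, rule conjI[OF M2_add[OF 1(1) 2(1)] E])

next
  case (mult a b)
  note IH1 = mult.IH(1) and IH2 = mult.IH(2)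
  obtain \<alpha>1 d1 m1 where 1: "m1 \<in> M2" "a = fps_const \<alpha>1 + (\<Sum>l<i. fps_const (d1 l) * x l) + m1"
    using IH1 by (elim exE conjE) (rule that)
  obtain \<alpha>2 d2 m2 where 2: "m2 \<in> M2" "b = fps_const \<alpha>2 + (\<Sum>l<i. fps_const (d2 l) * x l) + m2"
    using IH2 by (elim exE conjE) (rule that)
  define L1 where "L1 = (\<Sum>l<i. fps_const (d1 l) * x l)"
  define L2 where "L2 = (\<Sum>l<i. fps_const (d2 l) * x l)"
  have L: "(\<Sum>l<i. fps_const (\<alpha>1 * d2 l + \<alpha>2 * d1 l) * x l) = fps_const \<alpha>1 * L2 + fps_const \<alpha>2 * L1"
    unfolding L1_def L2_def by (simp only: fc_add fc_mult sum.distrib sum_distrib_left)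
  define m where "m = fps_const \<alpha>1 * m2 + fps_const \<alpha>2 * m1 + (L1 + m1) * (L2 + m2)"
  have mM2: "m \<in> M2" unfolding m_def
    using 1 2 lin_M[OF xM] M2_sub_M by (auto simp: L1_def L2_def intro!: M2_add M2_cmult M2_prod M_add)
  have E: "a * b = fps_const (\<alpha>1 * \<alpha>2) + (\<Sum>l<i. fps_const (\<alpha>1 * d2 l + \<alpha>2 * d1 l) * x l) + m"
    unfolding L m_def 1(2) 2(2) L1_def[symmetric] L2_def[symmetric] ring_id1 by simp
  show ?case by (rule exI, rule exI, rule exI, rule conjI[OF mM2 E])
qed

lemma no_val:
  fixes i :: nat and a :: "nat \<Rightarrow> nat"
  assumes x: "\<forall>l<i. x l \<in> M \<and> x l \<noteq> 0 \<and> subdegree (x l) = a l"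
    and amono: "\<forall>l l'. l < l' \<longrightarrow> l' \<le> i \<longrightarrow> a l < a l'"
    and aA: "\<forall>l\<le>i. a l \<notin> val M2"
    and Q: "Q \<in> k_alg (x`{..<i})" "Q \<in> M" "zb (a i) Q" "Q $ (a i) \<noteq> 0"
  shows False
proof -
  obtain \<alpha> d m where dm: "m \<in> M2" "Q = fps_const \<alpha> + (\<Sum>l<i. fps_const (d l) * x l) + m"
  proof -
    have "\<forall>l<i. x l \<in> M" using x by auto
    from span_decomp[OF this Q(1)] show ?thesis by (elim exE conjE) (rule that)
  qed
  define L where "L = (\<Sum>l<i. fps_const (d l) * x l)"
  have LM: "L \<in> M" unfolding L_def using lin_M x by auto
  have mM: "m \<in> M" using dm M2_sub_M by auto
  have "Q $ 0 = \<alpha> + L $ 0 + m $ 0" using dm by (simp add: L_def)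
  then have "\<alpha> = 0" using Q(2) LM mM by (simp add: mem_M)
  then have QLm: "Q = L + m" using dm by (simp add: L_def)
  show False
  proof (cases "\<exists>l<i. d l \<noteq> 0")
    case True
    define l0 where "l0 = Min {l. l < i \<and> d l \<noteq> 0}"
    have fin: "finite {l. l < i \<and> d l \<noteq> 0}" by (rule finite_subset[of _ "{..<i}"]) auto
    have ne: "{l. l < i \<and> d l \<noteq> 0} \<noteq> {}" using True by auto
    have "l0 \<in> {l. l < i \<and> d l \<noteq> 0}" unfolding l0_def by (rule Min_in[OF fin ne])
    then have l0: "l0 < i" "d l0 \<noteq> 0" by auto
    have below: "d l = 0" if "l < l0" for l
    proof (rule ccontr)
      assume "d l \<noteq> 0"
      moreover have "l < i" using that l0(1) by simp
      ultimately have "l \<in> {l. l < i \<and> d l \<noteq> 0}" by simp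
      then have "l0 \<le> l" unfolding l0_def by (rule Min_le[OF fin])
      then show False using that by simp
    qed
    have Lj: "L $ j = d l0 * x l0 $ j" if j: "j \<le> a l0" for j
    proof -
      have "L $ j = (\<Sum>l<i. d l * x l $ j)" by (simp add: L_def fps_sum_nth)
      also have "\<dots> = d l0 * x l0 $ j + (\<Sum>l\<in>{..<i} - {l0}. d l * x l $ j)"
        using l0 by (subst sum.remove[of _ l0]) auto
      also have "(\<Sum>l\<in>{..<i} - {l0}. d l * x l $ j) = 0"
      proof (rule sum.neutral, intro ballI)
        fix l assume l: "l \<in> {..<i} - {l0}"
        show "d l * x l $ j = 0"
        proof (cases "l < l0")
          case True then show ?thesis using below by simp
        next
          case False
          then have "l0 < l" using l by auto
          moreover have "l \<le> i" using l by auto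
          ultimately have "a l0 < a l" using amono[rule_format, of l0 l] by simp
          moreover have "subdegree (x l) = a l" using spec[OF x, of l] l by simp
          ultimately have "j < subdegree (x l)" using j by simp
          then have "x l $ j = 0" by (rule nth_less_subdegree_zero)
          then show ?thesis by simp
        qed
      qed
      finally show ?thesis by simp
    qed
    have xl0: "x l0 \<noteq> 0" "subdegree (x l0) = a l0" using spec[OF x, of l0] l0 by simp_all
    have "a l0 < a i" using amono[rule_format, of l0 i] l0(1) by simp
    have mz: "zb (a l0) m"
    proof -
      have "m = Q - L" using QLm by simp
      moreover have "zb (a l0) Q" using zb_mono[OF Q(3)] \<open>a l0 < a i\<close> by simp
      moreover have "zb (a l0) L" unfolding zb_def
      proof (intro allI impI)
        fix j assume "j < a l0"
        then have "x l0 $ j = 0" using xl0 by (intro nth_less_subdegree_zero) simp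
        then show "L $ j = 0" using Lj[of j] \<open>j < a l0\<close> by simp
      qed
      ultimately show ?thesis by (simp add: zb_diff)
    qed
    have "m $ (a l0) \<noteq> 0"
    proof -
      have "Q $ (a l0) = 0" using Q(3) \<open>a l0 < a i\<close> by (simp add: zb_def)
      moreover have "L $ (a l0) \<noteq> 0" using Lj[of "a l0"] l0 xl0 nth_subdegree_nonzero[OF xl0(1)] by simp
      ultimately show ?thesis using QLm by (cases "m $ a l0 = 0") simp_all
    qed
    then have "m \<noteq> 0 \<and> subdegree m = a l0" using subdeg_eq[OF mz] by blast
    then have "a l0 \<in> val M2" using dm(1) unfolding val_def by (intro image_eqI[of _ _ m]) auto
    then show False using aA l0 by auto
  next
    case False
    then have "L = 0" by (simp add: L_def)
    then have "Q = m" using QLm by simp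
    then have "m \<noteq> 0 \<and> subdegree m = a i" using subdeg_eq[OF Q(3) Q(4)] by simp
    then have "a i \<in> val M2" using dm(1) unfolding val_def by (intro image_eqI[of _ _ m]) auto
    then show False using aA by auto
  qed
qed

end


context br begin

abbreviation "AA \<equiv> val M - val M2"

lemma X_pow_M: "c \<ge> 1 \<Longrightarrow> (\<And>f. zb c f \<Longrightarrow> f \<in> R) \<Longrightarrow> c \<le> w \<Longrightarrow> fps_X ^ w \<in> M"
proof -
  assume c: "c \<ge> 1" "\<And>f. zb c f \<Longrightarrow> f \<in> R" "c \<le> w"
  have "zb c (fps_X ^ w)" using c(3) by (auto simp: zb_def)
  then show ?thesis using c by (simp add: mem_M)
qed

lemma AA_finite: "finite AA"
proof -
  obtain c where c: "c \<ge> 1" "\<And>f. zb c f \<Longrightarrow> f \<in> R" using conductor by blast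
  have "AA \<subseteq> {..<2*c}"
  proof
    fix w assume w: "w \<in> AA"
    show "w \<in> {..<2*c}"
    proof (rule ccontr)
      assume "w \<notin> {..<2*c}"
      then have "2 * c \<le> w" by simp
      have "fps_X ^ c * fps_X ^ (w - c) \<in> M2"
        using \<open>2*c \<le> w\<close> by (intro M2_prod X_pow_M[OF c]) auto
      moreover have "fps_X ^ c * fps_X ^ (w - c) = (fps_X ^ w :: 'a fps)"
        using \<open>2*c \<le> w\<close> by (simp flip: power_add)
      ultimately have "fps_X ^ w \<in> M2" by simp
      moreover have "fps_X ^ w \<noteq> (0::'a fps)" "subdegree (fps_X ^ w :: 'a fps) = w"
        by (auto simp: fps_X_power_subdegree)
      ultimately have "w \<in> val M2" unfolding val_def by (intro image_eqI[of _ _ "fps_X ^ w"]) auto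
      then show False using w by simp
    qed
  qed
  then show ?thesis by (rule finite_subset) simp
qed

lemma zb_M_least:
  assumes "f \<in> M" shows "zb (LEAST w. w \<in> val M) f"
proof (cases "f = 0")
  case False
  then have "subdegree f \<in> val M" using assms by (auto simp: val_def)
  then have "(LEAST w. w \<in> val M) \<le> subdegree f" by (rule Least_le)
  then show ?thesis using zb_subdegree[OF False] zb_mono by blast
qed simp

lemma AA_nonempty: "AA \<noteq> {}"
proof -
  obtain c where c: "c \<ge> 1" "\<And>f. zb c f \<Longrightarrow> f \<in> R" using conductor by blast
  have "fps_X ^ c \<in> M" by (rule X_pow_M[OF c(1) c(2) order_refl])
  then have "c \<in> val M" unfolding val_def
    by (intro image_eqI[of _ _ "fps_X ^ c"]) (auto simp: fps_X_power_subdegree)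
  then have ex: "\<exists>w. w \<in> val M" by blast
  define m0 where "m0 = (LEAST w. w \<in> val M)"
  have m0: "m0 \<in> val M" unfolding m0_def using ex by (metis LeastI)
  then obtain f where f: "f \<in> M" "f \<noteq> 0" "subdegree f = m0" by (auto simp: val_def)
  have "f $ 0 = 0" using f by (simp add: mem_M)
  then have "m0 \<noteq> 0" using f(3) nth_subdegree_nonzero[OF f(2)] by metis
  have "m0 \<notin> val M2"
  proof
    assume "m0 \<in> val M2"
    then obtain e where e: "e \<in> M2" "e \<noteq> 0" "subdegree e = m0" by (auto simp: val_def)
    obtain N :: nat and a b where ab: "e = (\<Sum>l<N. a l * b l)" "\<forall>l<N. a l \<in> M \<and> b l \<in> M"
      using e(1) unfolding mem_M2 by blast
    have "zb (m0 + m0) e" unfolding ab(1) m0_def using ab(2)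
      by (intro zb_sum zb_mult zb_M_least) auto
    then have "e $ m0 = 0" using \<open>m0 \<noteq> 0\<close> by (auto simp: zb_def)
    then show False using e nth_subdegree_nonzero[OF e(2)] by simp
  qed
  then show ?thesis using m0 by blast
qed

lemma factor:
  fixes f h :: "'a fps"
  assumes "f \<noteq> 0" "zb (subdegree f + c) h"
  shows "\<exists>w. zb c w \<and> h = f * w"
proof -
  define a where "a = subdegree f"
  define u where "u = fps_shift a f"
  have u0: "u $ 0 \<noteq> 0" using assms(1) by (simp add: u_def a_def)
  have fu: "f = u * fps_X ^ a" unfolding u_def a_def by (rule subdegree_decompose)
  define h' where "h' = fps_shift (a + c) h"
  have hh: "h = fps_X ^ (a + c) * h'"
  proof (rule fps_ext)
    fix n show "h $ n = (fps_X ^ (a + c) * h') $ n"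
      using assms(2) by (auto simp: fps_X_power_mult_nth h'_def a_def zb_def)
  qed
  define w where "w = fps_X ^ c * (h' * inverse u)"
  have "f * w = fps_X ^ (a + c) * h' * (u * inverse u)"
    by (simp add: fu w_def power_add algebra_simps)
  also have "u * inverse u = 1" using u0 by (rule inverse_mult_eq_1')
  finally have "h = f * w" using hh by simp
  moreover have "zb c w" unfolding w_def by (rule zb_X_power)
  ultimately show ?thesis by blast
qed

end


locale gens = br +
  fixes y :: "nat \<Rightarrow> 'a fps" and n :: nat
  assumes mg: "minimal_generators R (max_ideal R) n y"
begin

abbreviation "hk \<equiv> sorted_list_of_set AA"

lemma hk_set: "set hk = AA" using AA_finite by simp
lemma hk_mono: "l < l' \<Longrightarrow> l' < length hk \<Longrightarrow> hk ! l < hk ! l'"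
  using sorted_wrt_nth_less[OF strict_sorted_list_of_set[of AA]] by blast
lemma hk_in: "l < length hk \<Longrightarrow> hk ! l \<in> AA" using hk_set nth_mem by blast
lemma hk_below:
  assumes "w \<in> AA" "i < length hk" "w < hk ! i" shows "\<exists>l<i. hk ! l = w"
proof -
  obtain l where l: "l < length hk" "hk ! l = w" using assms(1) hk_set by (metis in_set_conv_nth)
  have "l < i"
  proof (rule ccontr)
    assume "\<not> l < i"
    then have "i = l \<or> i < l" by auto
    then have "hk ! i \<le> hk ! l" using hk_mono[of i l] l(1) by auto
    then show False using assms(3) l(2) by simp
  qed
  then show ?thesis using l by blast
qed

lemma y_M: "j < n \<Longrightarrow> y j \<in> M" using mg by (simp add: minimal_generators_def)
lemma y_gen: "M = {(\<Sum>i\<in>{..<n}. r i * y i) | r. \<forall>i\<in>{..<n}. r i \<in> R}"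
  using mg by (simp add: minimal_generators_def generates_def)
lemma y_min: "j < n \<Longrightarrow> \<not> generates R M ({..<n} - {j}) y"
  using mg by (simp add: minimal_generators_def)

definition Inv :: "nat \<Rightarrow> (nat \<Rightarrow> nat) \<Rightarrow> (nat \<Rightarrow> 'a fps) \<Rightarrow> (nat \<Rightarrow> 'a fps) \<Rightarrow> bool" where
  "Inv i \<sigma> x z \<longleftrightarrow> inj_on \<sigma> {..<i} \<and> \<sigma> ` {..<i} \<subseteq> {..<n} \<and>
     (\<forall>l<i. x l \<in> M \<and> x l \<noteq> 0 \<and> subdegree (x l) = hk ! l \<and> z l \<in> R \<and>
         z l \<in> k_alg (x ` {..<l}) \<and> y (\<sigma> l) = x l + z l) \<and> (0 < i \<longrightarrow> z 0 = 0)"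

lemma step:
  assumes inv: "Inv i \<sigma> x z" and i: "i < length hk"
  shows "\<exists>j q. j < n \<and> j \<notin> \<sigma> ` {..<i} \<and> q \<in> k_alg (x ` {..<i}) \<and> q \<in> M \<and>
           y j - q \<noteq> 0 \<and> subdegree (y j - q) = hk ! i \<and> (i = 0 \<longrightarrow> q = 0)"
proof -
  define S where "S = x ` {..<i}"
  define N where "N = hk ! i"
  have xi: "\<forall>l<i. x l \<in> M \<and> x l \<noteq> 0 \<and> subdegree (x l) = hk ! l" using inv by (simp add: Inv_def)
  have SM: "S \<subseteq> M" using xi by (auto simp: S_def)
  have H: "\<forall>w<N. w \<in> val M \<and> w \<notin> val M2 \<longrightarrow> (\<exists>s\<in>S. s \<noteq> 0 \<and> subdegree s = w)"
  proof (intro allI impI)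
    fix w assume w: "w < N" "w \<in> val M \<and> w \<notin> val M2"
    then obtain l where l: "l < i" "hk ! l = w" using hk_below[of w i] i by (auto simp: N_def)
    then show "\<exists>s\<in>S. s \<noteq> 0 \<and> subdegree s = w" using xi by (auto simp: S_def)
  qed
  have AP: "(\<forall>f\<in>M. \<exists>p\<in>k_alg S. p \<in> M \<and> zb N (f - p)) \<and>
           (\<forall>g\<in>M2. \<exists>p\<in>k_alg S. p \<in> M2 \<and> zb (Suc N) (g - p))"
    by (rule approx[OF SM H order_refl])
  have NA: "N \<in> AA" using hk_in[OF i] by (simp add: N_def)
  then obtain u where u: "u \<in> M" "u \<noteq> 0" "subdegree u = N" by (auto simp: val_def)
  obtain r where r: "u = (\<Sum>j\<in>{..<n}. r j * y j)" "\<forall>j\<in>{..<n}. r j \<in> R"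
    using u(1) y_gen by blast
  define g where "g = (\<Sum>j<n. (r j - fps_const (r j $ 0)) * y j)"
  have gM2: "g \<in> M2" unfolding g_def using r(2) y_M
    by (intro M2_intro) (auto simp: mem_M intro: R_diff R_const)
  have ug: "u = (\<Sum>j<n. fps_const (r j $ 0) * y j) + g"
    unfolding g_def r(1) by (simp add: sum.distrib[symmetric] algebra_simps)
  obtain p where p: "p \<in> k_alg S" "p \<in> M2" "zb (Suc N) (g - p)" using AP gM2 by blast
  have "\<forall>j. \<exists>q. j < n \<longrightarrow> q \<in> k_alg S \<and> q \<in> M \<and> zb N (y j - q)" using AP y_M by blast
  then obtain q' where q': "\<And>j. j < n \<Longrightarrow> q' j \<in> k_alg S \<and> q' j \<in> M \<and> zb N (y j - q' j)" by metis
  have yS: "y j \<in> k_alg S" if jj: "j \<in> \<sigma> ` {..<i}" for j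
  proof -
    obtain l where l: "l < i" "j = \<sigma> l" using jj by auto
    have "z l \<in> k_alg (x ` {..<l})" "y (\<sigma> l) = x l + z l" using inv l(1) by (auto simp: Inv_def)
    moreover have "x ` {..<l} \<subseteq> S" using l(1) by (auto simp: S_def)
    moreover have "x l \<in> S" using l(1) by (auto simp: S_def)
    ultimately show ?thesis using l(2) by (auto intro: k_alg.add k_alg.gen k_alg_mono)
  qed
  have sig_n: "\<sigma> ` {..<i} \<subseteq> {..<n}" using inv by (simp add: Inv_def)
  define q where "q j = (if j \<in> \<sigma> ` {..<i} then y j else q' j)" for j
  have q: "q j \<in> k_alg S \<and> q j \<in> M \<and> zb N (y j - q j)" if "j < n" for j
    using q'[OF that] yS y_M[OF that] by (auto simp: q_def)
  have "\<exists>j<n. j \<notin> \<sigma> ` {..<i} \<and> (y j - q' j) $ N \<noteq> 0"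
  proof (rule ccontr)
    assume nE: "\<not> (\<exists>j<n. j \<notin> \<sigma> ` {..<i} \<and> (y j - q' j) $ N \<noteq> 0)"
    have z1: "zb (Suc N) (y j - q j)" if "j < n" for j
    proof (cases "j \<in> \<sigma> ` {..<i}")
      case True then show ?thesis by (simp add: q_def)
    next
      case False
      then have "(y j - q j) $ N = 0" using nE that by (auto simp: q_def)
      then show ?thesis using q[OF that] by (auto simp: zb_def less_Suc_eq)
    qed
    define Q where "Q = (\<Sum>j<n. fps_const (r j $ 0) * q j) + p"
    have QK: "Q \<in> k_alg S" unfolding Q_def using q p
      by (intro k_alg.add k_alg_sum k_alg_cmult) auto
    have QM: "Q \<in> M" unfolding Q_def using q p M2_sub_M
      by (intro M_add M_sum M_cmult) auto
    have "u - Q = (\<Sum>j<n. fps_const (r j $ 0) * (y j - q j)) + (g - p)"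
      unfolding ug Q_def by (simp add: sum_subtractf[symmetric] algebra_simps)
    then have uQ: "zb (Suc N) (u - Q)" using z1 p(3)
      by (auto intro!: zb_add zb_sum zb_cmult)
    have zu: "zb N u" using zb_subdegree[OF u(2)] u(3) by simp
    have "Q = u - (u - Q)" by simp
    then have zQ: "zb N Q" using zu zb_mono[OF uQ, of N] zb_diff by fastforce
    have "(u - Q) $ N = 0" using uQ by (simp add: zb_def)
    moreover have "u $ N \<noteq> 0" using u(3) nth_subdegree_nonzero[OF u(2)] by simp
    ultimately have QN: "Q $ N \<noteq> 0" by (cases "Q $ N = 0") simp_all
    show False
    proof (rule no_val[of i x "\<lambda>l. hk ! l" Q])
      show "\<forall>l<i. x l \<in> M \<and> x l \<noteq> 0 \<and> subdegree (x l) = hk ! l" by (rule xi)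
      show "\<forall>l l'. l < l' \<longrightarrow> l' \<le> i \<longrightarrow> hk ! l < hk ! l'" using i hk_mono by auto
      show "\<forall>l\<le>i. hk ! l \<notin> val M2" using i hk_in by fastforce
      show "Q \<in> k_alg (x ` {..<i})" using QK by (simp add: S_def)
      show "Q \<in> M" by (rule QM)
      show "zb (hk ! i) Q" using zQ by (simp add: N_def)
      show "Q $ (hk ! i) \<noteq> 0" using QN by (simp add: N_def)
    qed
  qed
  then obtain j where j: "j < n" "j \<notin> \<sigma> ` {..<i}" "(y j - q' j) $ N \<noteq> 0" by blast
  have sd: "y j - q' j \<noteq> 0 \<and> subdegree (y j - q' j) = N"
    using subdeg_eq[of N "y j - q' j"] q'[OF j(1)] j(3) by blast
  have "q' j = 0" if "i = 0"
  proof -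
    have "q' j \<in> k_alg {}" using q'[OF j(1)] that by (simp add: S_def)
    then have "q' j = fps_const (q' j $ 0)" by (rule k_alg_empty)
    moreover have "q' j $ 0 = 0" using q'[OF j(1)] by (simp add: mem_M)
    ultimately show ?thesis by simp
  qed
  then show ?thesis using j q'[OF j(1)] sd by (intro exI[of _ j] exI[of _ "q' j"]) (auto simp: S_def N_def)
qed

end


context gens begin

lemma construct: "i \<le> length hk \<Longrightarrow> \<exists>\<sigma> x z. Inv i \<sigma> x z"
proof (induction i)
  case 0 show ?case by (intro exI) (simp add: Inv_def)
next
  case (Suc i)
  then obtain \<sigma> x z where inv: "Inv i \<sigma> x z" by auto
  have i: "i < length hk" using Suc.prems by simp
  obtain j q where jq: "j < n" "j \<notin> \<sigma> ` {..<i}" "q \<in> k_alg (x ` {..<i})" "q \<in> M"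
     "y j - q \<noteq> 0" "subdegree (y j - q) = hk ! i" "i = 0 \<longrightarrow> q = 0"
    using step[OF inv i] by blast
  define \<sigma>' where "\<sigma>' = \<sigma>(i := j)"
  define x' where "x' = x(i := y j - q)"
  define z' where "z' = z(i := q)"
  have old: "inj_on \<sigma> {..<i}" "\<sigma> ` {..<i} \<subseteq> {..<n}"
    "\<forall>l<i. x l \<in> M \<and> x l \<noteq> 0 \<and> subdegree (x l) = hk ! l \<and> z l \<in> R \<and>
         z l \<in> k_alg (x ` {..<l}) \<and> y (\<sigma> l) = x l + z l" "0 < i \<longrightarrow> z 0 = 0"
    using inv by (auto simp: Inv_def)
  have imx: "x' ` {..<l} = x ` {..<l}" if "l \<le> i" for l
    using that by (auto simp: x'_def)
  have ims: "\<sigma>' ` {..<i} = \<sigma> ` {..<i}" by (auto simp: \<sigma>'_def)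
  have lt: "{..<Suc i} = insert i {..<i}" by auto
  have "inj_on \<sigma>' {..<Suc i}"
  proof -
    have "inj_on \<sigma>' {..<i}" using old(1) by (auto simp: \<sigma>'_def inj_on_def)
    moreover have "\<sigma>' i \<notin> \<sigma>' ` {..<i}" using jq(2) ims by (simp add: \<sigma>'_def)
    ultimately show ?thesis unfolding lt by simp
  qed
  moreover have "\<sigma>' ` {..<Suc i} \<subseteq> {..<n}" using old(2) jq(1) ims unfolding lt by (auto simp: \<sigma>'_def)
  moreover have "\<forall>l<Suc i. x' l \<in> M \<and> x' l \<noteq> 0 \<and> subdegree (x' l) = hk ! l \<and> z' l \<in> R \<and>
         z' l \<in> k_alg (x' ` {..<l}) \<and> y (\<sigma>' l) = x' l + z' l"
  proof (intro allI impI)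
    fix l assume l: "l < Suc i"
    show "x' l \<in> M \<and> x' l \<noteq> 0 \<and> subdegree (x' l) = hk ! l \<and> z' l \<in> R \<and>
         z' l \<in> k_alg (x' ` {..<l}) \<and> y (\<sigma>' l) = x' l + z' l"
    proof (cases "l = i")
      case True
      have "x ` {..<i} \<subseteq> R" using old(3) M_R by auto
      then have "q \<in> R" using k_alg_R jq(3) by blast
      moreover have "y j - q \<in> M" using y_M[OF jq(1)] jq(4) by (rule M_diff)
      ultimately show ?thesis using True jq imx[of i] by (simp add: x'_def z'_def \<sigma>'_def)
    next
      case False
      then have "l < i" using l by simp
      then show ?thesis using old(3) imx[of l] by (simp add: x'_def z'_def \<sigma>'_def)
    qed
  qed
  moreover have "z' 0 = 0" using jq(7) old(4) by (cases "i = 0") (auto simp: z'_def)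
  ultimately have "Inv (Suc i) \<sigma>' x' z'" by (simp add: Inv_def)
  then show ?case by blast
qed

end


context gens begin

lemma len_le: "Inv L \<sigma> x z \<Longrightarrow> L \<le> n"
proof -
  assume inv: "Inv L \<sigma> x z"
  then have "inj_on \<sigma> {..<L}" "\<sigma> ` {..<L} \<subseteq> {..<n}" by (auto simp: Inv_def)
  then have "card (\<sigma> ` {..<L}) = L" "card (\<sigma> ` {..<L}) \<le> n"
    using card_image[of \<sigma> "{..<L}"] card_mono[of "{..<n}" "\<sigma> ` {..<L}"] by auto
  then show ?thesis by simp
qed

lemma len_ge:
  assumes inv: "Inv (length hk) \<sigma> x z" shows "n \<le> length hk"
proof (rule ccontr)
  define L where "L = length hk"
  assume "\<not> n \<le> length hk"
  then have Ln: "L < n" by (simp add: L_def)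
  have "\<not> {..<n} \<subseteq> \<sigma> ` {..<L}"
  proof
    assume "{..<n} \<subseteq> \<sigma> ` {..<L}"
    then have "n \<le> card (\<sigma> ` {..<L})" using card_mono[of "\<sigma> ` {..<L}" "{..<n}"] by auto
    also have "\<dots> \<le> L" using card_image_le[of "{..<L}" \<sigma>] by simp
    finally show False using Ln by simp
  qed
  then obtain j where j: "j < n" "j \<notin> \<sigma> ` {..<L}" by auto
  have "hk \<noteq> []" using AA_nonempty hk_set by (metis empty_set)
  then have L0: "0 < L" unfolding L_def by (metis length_greater_0_conv)
  have old: "\<sigma> ` {..<L} \<subseteq> {..<n}"
    "\<forall>l<L. x l \<in> M \<and> x l \<noteq> 0 \<and> subdegree (x l) = hk ! l \<and> z l \<in> R \<and>
         z l \<in> k_alg (x ` {..<l}) \<and> y (\<sigma> l) = x l + z l"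
    using inv by (auto simp: Inv_def L_def)
  define T where "T = {..<n} - {j}"
  define I where "I = {(\<Sum>l\<in>T. r l * y l) | r. \<forall>l\<in>T. r l \<in> R}"
  have finT: "finite T" by (simp add: T_def)
  have I_intro: "(\<Sum>l\<in>T. r l * y l) \<in> I" if "\<forall>l\<in>T. r l \<in> R" for r
    using that unfolding I_def by blast
  have I_add: "f + g \<in> I" if fg: "f \<in> I" "g \<in> I" for f g
  proof -
    obtain r1 where r1: "f = (\<Sum>l\<in>T. r1 l * y l)" "\<forall>l\<in>T. r1 l \<in> R" using fg(1) by (auto simp: I_def)
    obtain r2 where r2: "g = (\<Sum>l\<in>T. r2 l * y l)" "\<forall>l\<in>T. r2 l \<in> R" using fg(2) by (auto simp: I_def)
    have "f + g = (\<Sum>l\<in>T. (r1 l + r2 l) * y l)" by (simp add: r1 r2 sum.distrib distrib_right)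
    moreover have "\<forall>l\<in>T. r1 l + r2 l \<in> R" using r1 r2 by (auto intro: R_add)
    ultimately show ?thesis using I_intro[of "\<lambda>l. r1 l + r2 l"] by simp
  qed
  have I_mult: "\<rho> * f \<in> I" if rf: "\<rho> \<in> R" "f \<in> I" for \<rho> f
  proof -
    obtain r1 where r1: "f = (\<Sum>l\<in>T. r1 l * y l)" "\<forall>l\<in>T. r1 l \<in> R" using rf(2) by (auto simp: I_def)
    have "\<rho> * f = (\<Sum>l\<in>T. (\<rho> * r1 l) * y l)" by (simp add: r1 sum_distrib_left mult.assoc)
    moreover have "\<forall>l\<in>T. \<rho> * r1 l \<in> R" using r1 rf(1) by (auto intro: R_mult)
    ultimately show ?thesis using I_intro[of "\<lambda>l. \<rho> * r1 l"] by simp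
  qed
  have I_0: "0 \<in> I" using I_intro[of "\<lambda>_. 0"] R_0 by simp
  have I_gen: "y l \<in> I" if "l \<in> T" for l
  proof -
    have "(\<Sum>m\<in>T. (if m = l then 1 else 0) * y m) = (\<Sum>m\<in>T. (if m = l then y m else 0))"
      by (intro sum.cong) auto
    also have "\<dots> = y l" using that finT by simp
    finally have "y l = (\<Sum>m\<in>T. (if m = l then 1 else 0) * y m)" by simp
    moreover have "\<forall>m\<in>T. (if m = l then 1 else 0) \<in> R" using R_0 R_1 by auto
    ultimately show ?thesis using I_intro[of "\<lambda>m. if m = l then 1 else 0"] by simp
  qed
  have I_M: "f \<in> M" if "f \<in> I" for f
    using that y_M unfolding I_def T_def by (auto intro!: M_sum M_multR)
  have I_diff: "f - g \<in> I" if "f \<in> I" "g \<in> I" for f g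
  proof -
    have "fps_const (-1) * g \<in> I" using I_mult[OF R_const that(2)] .
    then have "f + fps_const (-1) * g \<in> I" using I_add that(1) by blast
    moreover have "f + fps_const (-1) * g = f - g" by (simp add: fps_const_neg[symmetric])
    ultimately show ?thesis by simp
  qed
  have kalg_I: "P - fps_const (P $ 0) \<in> I" if SI: "S \<subseteq> I" and P: "P \<in> k_alg S" for S P
    using P
  proof (induction P rule: k_alg.induct)
    case (const c) then show ?case using I_0 by simp
  next
    case (gen s)
    then have "s $ 0 = 0" using SI I_M mem_M by blast
    then show ?case using gen SI by auto
  next
    case (add a b)
    have eq: "a + b - fps_const ((a + b) $ 0) = (a - fps_const (a $ 0)) + (b - fps_const (b $ 0))"
      by (simp add: algebra_simps flip: fps_const_add)
    show ?case unfolding eq by (rule I_add[OF add.IH])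
  next
    case (mult a b)
    have SR: "S \<subseteq> R" using SI I_M M_R by blast
    have bR: "b \<in> R" using k_alg_R[OF SR mult.hyps(2)] .
    have eq: "a * b - fps_const ((a * b) $ 0) = (a - fps_const (a $ 0)) * b + fps_const (a $ 0) * (b - fps_const (b $ 0))"
      by (simp add: algebra_simps flip: fps_const_mult)
    have 1: "(a - fps_const (a $ 0)) * b \<in> I" using I_mult[OF bR mult.IH(1)] by (simp add: mult.commute)
    have 2: "fps_const (a $ 0) * (b - fps_const (b $ 0)) \<in> I" using I_mult[OF R_const mult.IH(2)] .
    show ?case unfolding eq by (rule I_add[OF 1 2])
  qed
  have xI: "l < L \<Longrightarrow> x l \<in> I" for l
  proof (induction l rule: less_induct)
    case (less l)
    have SI: "x ` {..<l} \<subseteq> I" using less by auto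
    have zK: "z l - fps_const (z l $ 0) \<in> I" using kalg_I[OF SI] old(2) less.prems by blast
    have sl: "\<sigma> l < n" using old(1) less.prems by auto
    have "x l \<in> M" using old(2) less.prems by blast
    then have "x l $ 0 = 0" by (simp add: mem_M)
    moreover have "y (\<sigma> l) $ 0 = 0" using y_M[OF sl] by (simp add: mem_M)
    moreover have eq: "y (\<sigma> l) = x l + z l" using old(2) less.prems by blast
    ultimately have "z l $ 0 = 0" by (metis add_0 fps_add_nth)
    then have zI: "z l \<in> I" using zK by simp
    have "\<sigma> l \<in> T" using old(1) j(2) less.prems by (auto simp: T_def)
    then have "y (\<sigma> l) \<in> I" by (rule I_gen)
    then have "y (\<sigma> l) - z l \<in> I" using zI I_diff by blast
    then show ?case using eq by simp
  qed
  define S where "S = x ` {..<L}"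
  have SI: "S \<subseteq> I" using xI by (auto simp: S_def)
  have SM: "S \<subseteq> M" using SI I_M by auto
  obtain c where c: "c \<ge> 1" "\<And>f. zb c f \<Longrightarrow> f \<in> R" using conductor by blast
  define B where "B = subdegree (x 0) + c"
  have H: "\<forall>w<B. w \<in> val M \<and> w \<notin> val M2 \<longrightarrow> (\<exists>s\<in>S. s \<noteq> 0 \<and> subdegree s = w)"
  proof (intro allI impI)
    fix w assume "w < B" "w \<in> val M \<and> w \<notin> val M2"
    then have "w \<in> set hk" using hk_set by simp
    then obtain l where "l < L" "hk ! l = w" by (auto simp: in_set_conv_nth L_def)
    then show "\<exists>s\<in>S. s \<noteq> 0 \<and> subdegree s = w" using old(2) by (auto simp: S_def)
  qed
  have "\<forall>f\<in>M. \<exists>p\<in>k_alg S. p \<in> M \<and> zb B (f - p)"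
    using approx[OF SM H order_refl] by blast
  then obtain q where q: "q \<in> k_alg S" "q \<in> M" "zb B (y j - q)" using y_M[OF j(1)] by blast
  have "q - fps_const (q $ 0) \<in> I" using kalg_I[OF SI q(1)] .
  then have qI: "q \<in> I" using q(2) by (simp add: mem_M)
  have x0: "x 0 \<noteq> 0" "x 0 \<in> I" using old(2) L0 xI by auto
  obtain w where w: "zb c w" "y j - q = x 0 * w" using factor[OF x0(1)] q(3) by (auto simp: B_def)
  have "y j - q \<in> I" using w I_mult[OF c(2)[OF w(1)] x0(2)] by (simp add: mult.commute)
  then have "q + (y j - q) \<in> I" using qI I_add by blast
  then have yjI: "y j \<in> I" by simp
  then obtain s where s: "y j = (\<Sum>l\<in>T. s l * y l)" "\<forall>l\<in>T. s l \<in> R" by (auto simp: I_def)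
  have "generates R M T y"
    unfolding generates_def
  proof (rule set_eqI, rule iffI)
    fix f assume "f \<in> M"
    then obtain r where r: "f = (\<Sum>l\<in>{..<n}. r l * y l)" "\<forall>l\<in>{..<n}. r l \<in> R"
      using y_gen by blast
    have "f = r j * y j + (\<Sum>l\<in>T. r l * y l)"
      unfolding r(1) T_def using j(1) by (subst sum.remove[of _ j]) auto
    also have "\<dots> = (\<Sum>l\<in>T. (r l + r j * s l) * y l)"
      by (simp add: s(1) sum_distrib_left sum.distrib algebra_simps)
    finally have "f = (\<Sum>l\<in>T. (r l + r j * s l) * y l)" .
    moreover have "\<forall>l\<in>T. r l + r j * s l \<in> R" using r(2) s(2) j(1) by (auto simp: T_def intro!: R_add R_mult)
    ultimately show "f \<in> {(\<Sum>i\<in>T. r i * y i) | r. \<forall>i\<in>T. r i \<in> R}"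
      by (intro CollectI exI[of _ "\<lambda>l. r l + r j * s l"]) simp
  next
    fix f assume "f \<in> {(\<Sum>i\<in>T. r i * y i) | r. \<forall>i\<in>T. r i \<in> R}"
    then show "f \<in> M" using I_M by (simp add: I_def)
  qed
  then show False using y_min[OF j(1)] by (simp add: T_def)
qed

end

theorem mainTheorem13:
  fixes R :: "'a::field fps set" and y :: "nat \<Rightarrow> 'a fps" and n :: nat
  assumes "complete_local_branch R"
    and "minimal_generators R (max_ideal R) n y"
  shows "length (herzog_kunz R) = n \<and>
    (\<exists>\<sigma>. bij_betw \<sigma> {..<n} {..<n} \<and>
      (\<exists>x z. (\<forall>i<n. x i \<in> R \<and> x i \<noteq> 0 \<and> subdegree (x i) = herzog_kunz R ! i \<and>
                     z i \<in> R \<and> z i \<in> k_alg (x ` {..<i}) \<and>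
                     y (\<sigma> i) = x i + z i)
             \<and> (0 < n \<longrightarrow> z 0 = 0)))"
proof -
  interpret g: gens R y n using assms by (simp add: gens_def br_def gens_axioms_def)
  have hkdef: "herzog_kunz R = g.hk" by (simp add: herzog_kunz_def)
  obtain \<sigma> x z where inv0: "g.Inv (length g.hk) \<sigma> x z" using g.construct by blast
  have len: "length g.hk = n" using g.len_le[OF inv0] g.len_ge[OF inv0] by simp
  then have inv: "g.Inv n \<sigma> x z" using inv0 by simp
  have inj: "inj_on \<sigma> {..<n}" and sub: "\<sigma> ` {..<n} \<subseteq> {..<n}" using inv by (auto simp: g.Inv_def)
  have "card (\<sigma> ` {..<n}) = card {..<n}" using card_image[OF inj] by simp
  then have "\<sigma> ` {..<n} = {..<n}" using card_subset_eq[OF _ sub] by simp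
  then have bij: "bij_betw \<sigma> {..<n} {..<n}" using inj by (simp add: bij_betw_def)
  have props: "\<forall>i<n. x i \<in> R \<and> x i \<noteq> 0 \<and> subdegree (x i) = herzog_kunz R ! i \<and>
                     z i \<in> R \<and> z i \<in> k_alg (x ` {..<i}) \<and> y (\<sigma> i) = x i + z i"
    using inv g.M_R unfolding hkdef by (auto simp: g.Inv_def)
  have z0: "0 < n \<longrightarrow> z 0 = 0" using inv by (simp add: g.Inv_def)
  have len': "length (herzog_kunz R) = n" using len hkdef by simp
  show ?thesis
    by (intro conjI exI[of _ \<sigma>] exI[of _ x] exI[of _ z] len' bij props z0)
qed

end
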